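(* Let $(Q,F)$ be a finite ice quiver with $Q_0=\{1,\dots,m\}$, $F_0=\{n+1,\dots,m\}$, whose Euler matrix $\widehat B$ satisfies $\det\widehat B\neq0$, and let $(\widetilde B,\Lambda)$ be its associated compatible pair. If $v\in Q_0\setminus F_0$ is an unfrozen vertex not incident to loops or $2$-cycles, then the Euler matrix of $\mu_v^{\mathrm{FZ}}(Q,F)$ is invertible and $(\mu_v(\widetilde B),\mu_v(\Lambda))$ is the compatible pair associated with $\mu_v^{\mathrm{FZ}}(Q,F)$.
   Context: Euler matrix: $\widehat B=(b_{ij})_{1\le i,j\le m}$ with $b_{ii}=0$ for $i\le n$, $b_{ii}=1$ for $i>n$, and $b_{ij}=\#\{\text{unfrozen arrows } i\to j\}-\#\{\text{arrows } j\to i\}$ for $i\neq j$. The associated compatible pair is $(\widetilde B,\Lambda)$ with $\widetilde B$ the first $n$ columns of $\widehat B$ and $\Lambda=|\det\widehat B|(\widehat B^{-T}-\widehat B^{-1})$. Mutation rules: $\mu_v(\widetilde B)=(b'_{ij})$ with $b'_{ij}=-b_{ij}$ if $i=v$ or $j=v$, and $b'_{ij}=b_{ij}+[b_{iv}]_+[b_{vj}]_+-[-b_{iv}]_+[-b_{vj}]_+$ otherwise ($[x]_+=\max\{x,0\}$). $\mu_v(\Lambda)=(\lambda'_{ij})$ with $\lambda'_{iv}=-\lambda_{iv}+\sum_{l}[b_{lv}]_+\lambda_{il}$ for $i\neq v$, $\lambda'_{vj}=-\lambda_{vj}+\sum_l[b_{lv}]_+\lambda_{lj}$ for $j\neq v$,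 and $\lambda'_{ij}=\lambda_{ij}$ otherwise. Extended Fomin–Zelevinsky mutation $\mu^{\mathrm{FZ}}_v(Q,F)$: (1) for each pair of arrows $\alpha:u\to v$, $\beta:v\to w$ add an unfrozen arrow $u\to w$; (2) reverse every arrow incident to $v$; (3) remove a maximal collection of $2$-cycles consisting of unfrozen arrows; (4) replace each $2$-cycle in a maximal collection of $2$-cycles containing exactly one frozen arrow by a frozen arrow in the direction of the unfrozen arrow of that $2$-cycle. The frozen vertices are unchanged. *)

theory Defs
  imports "Jordan_Normal_Form.Determinant" "Jordan_Normal_Form.Gauss_Jordan_Elimination"
begin

text \<open>Ice quivers on the vertex set {0..<m} (0-based relabelling of {1..m}); the frozen
  vertices are {n..<m} and the unfrozen ones {0..<n}.  A (finite) quiver is recorded up to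
  isomorphism by its arrow multiplicities: uarr i j = number of unfrozen arrows i -> j,
  farr i j = number of frozen arrows i -> j.\<close>

record iquiver =
  uarr :: "nat \<Rightarrow> nat \<Rightarrow> nat"
  farr :: "nat \<Rightarrow> nat \<Rightarrow> nat"

definition arrs :: "iquiver \<Rightarrow> nat \<Rightarrow> nat \<Rightarrow> nat" where
  "arrs Q i j = uarr Q i j + farr Q i j"

definition ice_quiver :: "nat \<Rightarrow> nat \<Rightarrow> iquiver \<Rightarrow> bool" where
  "ice_quiver m n Q \<longleftrightarrow> n \<le> m \<and>
     (\<forall>i j. arrs Q i j \<noteq> 0 \<longrightarrow> i < m \<and> j < m) \<and>
     (\<forall>i j. farr Q i j \<noteq> 0 \<longrightarrow> n \<le> i \<and> n \<le> j)"

definition euler_matrix :: "nat \<Rightarrow> nat \<Rightarrow> iquiver \<Rightarrow> int mat" where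
  "euler_matrix m n Q = mat m m (\<lambda>(i,j).
     if i = j then (if i < n then 0 else 1)
     else int (uarr Q i j) - int (arrs Q j i))"

definition pos :: "int \<Rightarrow> int" where
  "pos x = max x 0"

definition Btilde :: "nat \<Rightarrow> nat \<Rightarrow> iquiver \<Rightarrow> int mat" where
  "Btilde m n Q = mat m n (\<lambda>(i,j). euler_matrix m n Q $$ (i,j))"

definition Lambda :: "nat \<Rightarrow> nat \<Rightarrow> iquiver \<Rightarrow> rat mat" where
  "Lambda m n Q = (let Bh = map_mat rat_of_int (euler_matrix m n Q);
                       Bi = the (mat_inverse Bh)
                   in of_int \<bar>det (euler_matrix m n Q)\<bar> \<cdot>\<^sub>m (transpose_mat Bi - Bi))"

definition mut_B :: "nat \<Rightarrow> int mat \<Rightarrow> int mat" where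
  "mut_B v B = mat (dim_row B) (dim_col B) (\<lambda>(i,j).
     if i = v \<or> j = v then - (B $$ (i,j))
     else B $$ (i,j) + pos (B $$ (i,v)) * pos (B $$ (v,j))
                     - pos (- B $$ (i,v)) * pos (- B $$ (v,j)))"

definition mut_L :: "nat \<Rightarrow> int mat \<Rightarrow> rat mat \<Rightarrow> rat mat" where
  "mut_L v B L = mat (dim_row L) (dim_col L) (\<lambda>(i,j).
     if i \<noteq> v \<and> j = v then
        - L $$ (i,v) + (\<Sum>l<dim_row B. of_int (pos (B $$ (l,v))) * L $$ (i,l))
     else if i = v \<and> j \<noteq> v then
        - L $$ (v,j) + (\<Sum>l<dim_row B. of_int (pos (B $$ (l,v))) * L $$ (l,j))
     else L $$ (i,j))"

text \<open>Step 1: add an unfrozen arrow u -> w for each pair u -> v -> w.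
  Step 2: reverse all arrows incident to v.
  Step 3: remove a maximal collection of unfrozen 2-cycles (between distinct vertices).
  Step 4: replace each 2-cycle of a maximal collection of 2-cycles with exactly one frozen
          arrow by a frozen arrow in the direction of its unfrozen arrow.\<close>
definition fz_mut :: "nat \<Rightarrow> iquiver \<Rightarrow> iquiver" where
  "fz_mut v Q = (let
      A1 = (\<lambda>i j. uarr Q i j + arrs Q i v * arrs Q v j);
      F1 = farr Q;
      A2 = (\<lambda>i j. if i = v \<or> j = v then A1 j i else A1 i j);
      F2 = (\<lambda>i j. if i = v \<or> j = v then F1 j i else F1 i j);
      A3 = (\<lambda>i j. if i = j then A2 i j else A2 i j - min (A2 i j) (A2 j i));
      k  = (\<lambda>i j. if i = j then 0 else min (A3 i j) (F2 j i));
      A4 = (\<lambda>i j. A3 i j - k i j);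
      F4 = (\<lambda>i j. F2 i j - k j i + k i j)
    in \<lparr>uarr = A4, farr = F4\<rparr>)"

end

theory Submission
  imports Defs
begin

definition Emat :: "nat \<Rightarrow> nat \<Rightarrow> (nat \<Rightarrow> 'a::comm_ring_1) \<Rightarrow> 'a mat" where
  "Emat m v p = mat m m (\<lambda>(i,j). if j = v then (if i = v then -1 else p i) else if i = j then 1 else 0)"

lemma Emat_carrier[simp]: "Emat m v p \<in> carrier_mat m m"
  by (simp add: Emat_def)

lemma Emat_dims[simp]: "dim_row (Emat m v p) = m" "dim_col (Emat m v p) = m"
  by (simp_all add: Emat_def)

lemma Emat_index: "i < m \<Longrightarrow> j < m \<Longrightarrow> Emat m v p $$ (i,j) =
   (if j = v then (if i = v then -1 else p i) else if i = j then 1 else 0)"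
  by (simp add: Emat_def)

lemma EX_entry:
  assumes X: "X \<in> carrier_mat m k" and i: "i < m" and j: "j < k" and v: "v < m"
  shows "(Emat m v p * X) $$ (i,j) = (if i = v then - X$$(v,j) else X$$(i,j) + p i * X$$(v,j))"
proof -
  have "(Emat m v p * X) $$ (i,j) = (\<Sum>l\<in>{0..<m}. Emat m v p $$ (i,l) * X $$ (l,j))"
    using X i j by (simp add: scalar_prod_def)
  also have "\<dots> = (\<Sum>l\<in>{0..<m}. (if l = v then (if i = v then -1 else p i) * X$$(v,j) else 0)
      + (if l = i \<and> i \<noteq> v then X$$(i,j) else 0))"
    using i by (intro sum.cong, auto simp: Emat_index)
  also have "\<dots> = (if i = v then - X$$(v,j) else X$$(i,j) + p i * X$$(v,j))"
    using i v by (simp add: sum.distrib)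
  finally show ?thesis .
qed

lemma YEt_entry:
  assumes Y: "Y \<in> carrier_mat k m" and i: "i < k" and j: "j < m" and v: "v < m"
  shows "(Y * transpose_mat (Emat m v p)) $$ (i,j) = (if j = v then - Y$$(i,v) else Y$$(i,j) + p j * Y$$(i,v))"
proof -
  have "(Y * transpose_mat (Emat m v p)) $$ (i,j) = (\<Sum>l\<in>{0..<m}. Y $$ (i,l) * Emat m v p $$ (j,l))"
    using Y i j by (simp add: scalar_prod_def)
  also have "\<dots> = (\<Sum>l\<in>{0..<m}. (if l = v then (if j = v then -1 else p j) * Y$$(i,v) else 0)
      + (if l = j \<and> j \<noteq> v then Y$$(i,j) else 0))"
    using j by (intro sum.cong, auto simp: Emat_index)
  also have "\<dots> = (if j = v then - Y$$(i,v) else Y$$(i,j) + p j * Y$$(i,v))"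
    using j v by (simp add: sum.distrib)
  finally show ?thesis .
qed

lemma XE_entry:
  assumes X: "X \<in> carrier_mat k m" and i: "i < k" and j: "j < m" and v: "v < m" and pv: "p v = 0"
  shows "(X * Emat m v p) $$ (i,j) = (if j = v then - X$$(i,v) + (\<Sum>l<m. p l * X$$(i,l)) else X$$(i,j))"
proof -
  have "(X * Emat m v p) $$ (i,j) = (\<Sum>l\<in>{0..<m}. X $$ (i,l) * Emat m v p $$ (l,j))"
    using X i j by (simp add: scalar_prod_def)
  also have "\<dots> = (\<Sum>l\<in>{0..<m}. (if j = v then p l * X$$(i,l) else 0)
      + (if l = j then (if j = v then - X$$(i,v) else X$$(i,j)) else 0))"
    using j pv by (intro sum.cong, auto simp: Emat_index)
  also have "\<dots> = (if j = v then - X$$(i,v) + (\<Sum>l<m. p l * X$$(i,l)) else X$$(i,j))"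
    using j v by (simp add: sum.distrib atLeast0LessThan)
  finally show ?thesis .
qed

lemma EtY_entry:
  assumes Y: "Y \<in> carrier_mat m k" and i: "i < m" and j: "j < k" and v: "v < m" and pv: "p v = 0"
  shows "(transpose_mat (Emat m v p) * Y) $$ (i,j) = (if i = v then - Y$$(v,j) + (\<Sum>l<m. p l * Y$$(l,j)) else Y$$(i,j))"
proof -
  have "(transpose_mat (Emat m v p) * Y) $$ (i,j) = (\<Sum>l\<in>{0..<m}. Emat m v p $$ (l,i) * Y $$ (l,j))"
    using Y i j by (simp add: scalar_prod_def)
  also have "\<dots> = (\<Sum>l\<in>{0..<m}. (if i = v then p l * Y$$(l,j) else 0)
      + (if l = i then (if i = v then - Y$$(v,j) else Y$$(i,j)) else 0))"
    using i pv by (intro sum.cong, auto simp: Emat_index)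
  also have "\<dots> = (if i = v then - Y$$(v,j) + (\<Sum>l<m. p l * Y$$(l,j)) else Y$$(i,j))"
    using i v by (simp add: sum.distrib atLeast0LessThan)
  finally show ?thesis .
qed

lemma Emat_sq: assumes v: "v < m" shows "Emat m v p * Emat m v p = 1\<^sub>m m"
proof (rule eq_matI)
  fix i j assume i: "i < dim_row (1\<^sub>m m :: 'a mat)" and j: "j < dim_col (1\<^sub>m m :: 'a mat)"
  then have i: "i < m" and j: "j < m" by auto
  show "(Emat m v p * Emat m v p) $$ (i,j) = 1\<^sub>m m $$ (i,j)"
    unfolding EX_entry[OF Emat_carrier i j v] using i j v by (auto simp: Emat_index)
qed auto


lemma fz_aux:
  fixes A2 F2 :: "nat \<Rightarrow> nat \<Rightarrow> nat" and i j :: nat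
  assumes ij: "i \<noteq> j"
  shows "int ((\<lambda>i j. (\<lambda>i j. if i = j then A2 i j else A2 i j - min (A2 i j) (A2 j i)) i j -
         (\<lambda>i j. if i = j then 0 else min ((\<lambda>i j. if i = j then A2 i j else A2 i j - min (A2 i j) (A2 j i)) i j) (F2 j i)) i j) i j)
   - int ((\<lambda>i j. (\<lambda>i j. if i = j then A2 i j else A2 i j - min (A2 i j) (A2 j i)) i j -
         (\<lambda>i j. if i = j then 0 else min ((\<lambda>i j. if i = j then A2 i j else A2 i j - min (A2 i j) (A2 j i)) i j) (F2 j i)) i j) j i
      + (\<lambda>i j. F2 i j - (\<lambda>i j. if i = j then 0 else min ((\<lambda>i j. if i = j then A2 i j else A2 i j - min (A2 i j) (A2 j i)) i j) (F2 j i)) j i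
           + (\<lambda>i j. if i = j then 0 else min ((\<lambda>i j. if i = j then A2 i j else A2 i j - min (A2 i j) (A2 j i)) i j) (F2 j i)) i j) j i)
   = int (A2 i j) - int (A2 j i) - int (F2 j i)"
proof -
  have ji: "j \<noteq> i" using ij by auto
  define a where "a = A2 i j"
  define b where "b = A2 j i"
  define f where "f = F2 j i"
  define g where "g = F2 i j"
  show ?thesis unfolding a_def[symmetric] b_def[symmetric] f_def[symmetric] g_def[symmetric]
    using ij ji
    apply (simp only: if_False a_def[symmetric] b_def[symmetric] f_def[symmetric] g_def[symmetric])
    by (cases "a \<le> b"; cases "a - min a b \<le> f"; cases "b - min b a \<le> g"; simp add: min_def)
qed

lemma fz_entry:
  fixes Q :: iquiver and v i j :: nat
  assumes ij: "i \<noteq> j"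
  shows "int (uarr (fz_mut v Q) i j) - int (arrs (fz_mut v Q) j i)
     = int ((\<lambda>x y. if x = v \<or> y = v then (\<lambda>x y. uarr Q x y + arrs Q x v * arrs Q v y) y x else (\<lambda>x y. uarr Q x y + arrs Q x v * arrs Q v y) x y) i j)
     - int ((\<lambda>x y. if x = v \<or> y = v then (\<lambda>x y. uarr Q x y + arrs Q x v * arrs Q v y) y x else (\<lambda>x y. uarr Q x y + arrs Q x v * arrs Q v y) x y) j i)
     - int ((\<lambda>x y. if x = v \<or> y = v then farr Q y x else farr Q x y) j i)"
  unfolding fz_mut_def Let_def iquiver.select_convs arrs_def[of "\<lparr>uarr = _, farr = _\<rparr>"]
  by (rule fz_aux[OF ij])


lemma pos_split: "(x::int) = pos x - pos (- x)"
  by (simp add: pos_def)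

lemma pos_mult_neg: "pos (x::int) * pos (- x) = 0"
  by (simp add: pos_def max_def)

lemma map_Emat: "map_mat (of_int :: int \<Rightarrow> 'a::comm_ring_1) (Emat m v p) = Emat m v (\<lambda>x. of_int (p x))"
  by (rule eq_matI, auto simp: Emat_def)

lemma map_transpose: "map_mat f (transpose_mat A) = transpose_mat (map_mat f A)"
  by (rule eq_matI, auto)

lemma euler_idx: "i < m \<Longrightarrow> j < m \<Longrightarrow> euler_matrix m n Q $$ (i,j) =
   (if i = j then (if i < n then 0 else 1) else int (uarr Q i j) - int (arrs Q j i))"
  by (simp add: euler_matrix_def)

lemma euler_carrier[simp]: "euler_matrix m n Q \<in> carrier_mat m m"
  by (simp add: euler_matrix_def)

lemma mat_inv_exists:
  fixes A :: "rat mat"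
  assumes A: "A \<in> carrier_mat m m" and d: "det A \<noteq> 0"
  obtains C where "mat_inverse A = Some C" "A * C = 1\<^sub>m m" "C * A = 1\<^sub>m m" "C \<in> carrier_mat m m"
proof (cases "mat_inverse A")
  case None
  from mat_inverse(1)[OF A None, of "()"] det_non_zero_imp_unit[OF A d, of "()"] show ?thesis by simp
next
  case (Some C)
  from mat_inverse(2)[OF A Some] Some that show ?thesis by auto
qed


lemma pos_arith: "(y::int) * pos x + pos (-y) * x = pos x * pos y - pos (-x) * pos (-y)"
  by (cases "x \<ge> 0"; cases "y \<ge> 0"; simp add: pos_def max_def algebra_simps)

theorem proposition4p3:
  fixes m n v :: nat and Q :: iquiver
  assumes "ice_quiver m n Q"
    and "det (euler_matrix m n Q) \<noteq> 0"
    and "v < n"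
    and "uarr Q v v = 0" and "farr Q v v = 0"
    and "\<And>u. u \<noteq> v \<Longrightarrow> arrs Q v u = 0 \<or> arrs Q u v = 0"
  shows "det (euler_matrix m n (fz_mut v Q)) \<noteq> 0
    \<and> mut_B v (Btilde m n Q) = Btilde m n (fz_mut v Q)
    \<and> mut_L v (Btilde m n Q) (Lambda m n Q) = Lambda m n (fz_mut v Q)"
proof -
  note iq = assms(1)[unfolded ice_quiver_def]
  have nm: "n \<le> m" using iq by auto
  have vm: "v < m" using assms(3) nm by auto
  have fv1: "farr Q v x = 0" for x using iq assms(3) by (meson leD)
  have fv2: "farr Q x v = 0" for x using iq assms(3) by (meson leD)
  have avv: "arrs Q v v = 0" using assms(4,5) by (simp add: arrs_def)
  define B where "B = euler_matrix m n Q"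
  define B' where "B' = euler_matrix m n (fz_mut v Q)"
  have Bc: "B \<in> carrier_mat m m" and B'c: "B' \<in> carrier_mat m m" unfolding B_def B'_def by auto
  have Bvv: "B $$ (v,v) = 0" using vm assms(3) unfolding B_def by (simp add: euler_idx)
  have Bxv: "B $$ (x,v) = int (arrs Q x v) - int (arrs Q v x)" if "x < m" "x \<noteq> v" for x
    using that vm fv2 unfolding B_def by (simp add: euler_idx arrs_def)
  have Bvx: "B $$ (v,x) = int (arrs Q v x) - int (arrs Q x v)" if "x < m" "x \<noteq> v" for x
    using that vm fv1 unfolding B_def by (simp add: euler_idx arrs_def)
  have skew: "B $$ (v,x) = - B $$ (x,v)" if "x < m" "x \<noteq> v" for x
    using Bxv[OF that] Bvx[OF that] by simp
  have p1: "pos (B $$ (x,v)) = int (arrs Q x v)" "pos (- B $$ (x,v)) = int (arrs Q v x)"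
    if "x < m" "x \<noteq> v" for x
    using Bxv[OF that] assms(6)[of x] that by (auto simp: pos_def)
  have p2: "pos (B $$ (v,x)) = int (arrs Q v x)" "pos (- B $$ (v,x)) = int (arrs Q x v)"
    if "x < m" "x \<noteq> v" for x
    using Bvx[OF that] assms(6)[of x] that by (auto simp: pos_def)
  have Ment: "B' $$ (i,j) = (if i = v \<or> j = v then - B $$ (i,j)
      else B $$ (i,j) + pos (B $$ (i,v)) * pos (B $$ (v,j)) - pos (- B $$ (i,v)) * pos (- B $$ (v,j)))"
    if i: "i < m" and j: "j < m" for i j
  proof (cases "i = j")
    case True
    show ?thesis
    proof (cases "i = v")
      case True
      then show ?thesis using \<open>i = j\<close> Bvv vm assms(3) unfolding B'_def by (simp add: euler_idx)
    next
      case False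
      have h1: "pos (B $$ (i,v)) * pos (B $$ (v,i)) = 0" using skew[OF i False] pos_mult_neg[of "B $$ (i,v)"] by simp
      have h2: "pos (- B $$ (i,v)) * pos (- B $$ (v,i)) = 0"
        using skew[OF i False] pos_mult_neg[of "B $$ (i,v)"] by (simp add: mult.commute)
      have "B' $$ (i,j) = B $$ (i,j)" using \<open>i = j\<close> i unfolding B'_def B_def by (simp add: euler_idx)
      have h3: "B $$ (i,i) + pos (B $$ (i,v)) * pos (B $$ (v,i)) - pos (- B $$ (i,v)) * pos (- B $$ (v,i)) = B $$ (i,i)"
        by (simp only: h1 h2)
      have nc: "\<not> (i = v \<or> i = v)" using False by simp
      show ?thesis unfolding \<open>i = j\<close>[symmetric] if_not_P[OF nc] h3
        using \<open>B' $$ (i,j) = B $$ (i,j)\<close> \<open>i = j\<close> by simp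
    qed
  next
    case False
    have e: "B' $$ (i,j) = int (uarr (fz_mut v Q) i j) - int (arrs (fz_mut v Q) j i)"
      using False i j unfolding B'_def by (simp add: euler_idx)
    have e0: "B $$ (i,j) = int (uarr Q i j) - int (arrs Q j i)"
      using False i j unfolding B_def by (simp add: euler_idx)
    note fe = fz_entry[OF False, where Q=Q and v=v]
    show ?thesis
    proof (cases "i = v")
      case True
      then show ?thesis using e e0 fe False avv fv1 fv2 by (simp add: arrs_def)
    next
      case iv: False
      show ?thesis
      proof (cases "j = v")
        case True
        then show ?thesis using e e0 fe False avv fv1 fv2 by (simp add: arrs_def)
      next
        case jv: False
        show ?thesis using e e0 fe False iv jv p1[OF i iv] p2[OF j jv]
          by (simp add: arrs_def algebra_simps)
      qed
    qed
  qed
  define p where "p = (\<lambda>x. pos (B $$ (x,v)))"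
  have pv: "p v = 0" unfolding p_def Bvv by (simp add: pos_def)
  define E where "E = Emat m v p"
  have Ec: "E \<in> carrier_mat m m" unfolding E_def by simp
  have BE: "B' = E * B * transpose_mat E"
  proof (rule eq_matI)
    fix i j assume "i < dim_row (E * B * transpose_mat E)" "j < dim_col (E * B * transpose_mat E)"
    then have i: "i < m" and j: "j < m" using Ec by auto
    have EBc: "E * B \<in> carrier_mat m m" using Ec Bc by auto
    have "(E * B * transpose_mat E) $$ (i,j) =
       (if j = v then - (E * B) $$ (i,v) else (E * B) $$ (i,j) + p j * (E * B) $$ (i,v))"
      unfolding E_def by (rule YEt_entry[OF EBc[unfolded E_def] i j vm])
    also have "\<dots> = B' $$ (i,j)"
    proof -
      have EB: "(E * B) $$ (i,y) = (if i = v then - B$$(v,y) else B$$(i,y) + p i * B$$(v,y))" if "y < m" for y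
        unfolding E_def by (rule EX_entry[OF Bc i that vm])
      show ?thesis
      proof (cases "i = v")
        case True
        then show ?thesis using EB[OF j] EB[OF vm] Ment[OF i j] Bvv pv by (auto simp: p_def)
      next
        case iv: False
        show ?thesis
        proof (cases "j = v")
          case True
          then show ?thesis using EB[OF j] EB[OF vm] Ment[OF i j] Bvv iv by auto
        next
          case jv: False
          have pj: "p j = pos (- B $$ (v,j))" unfolding p_def skew[OF j jv] by simp
          have s1: "B $$ (v,j) = pos (B $$ (v,j)) - pos (- B $$ (v,j))" by (rule pos_split)
          have s2: "B $$ (i,v) = pos (B $$ (i,v)) - pos (- B $$ (i,v))" by (rule pos_split)
          show ?thesis using EB[OF j] EB[OF vm] Ment[OF i j] Bvv iv jv pj
            using pos_arith[of "B $$ (v,j)" "B $$ (i,v)"]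
            by (simp add: p_def algebra_simps)
        qed
      qed
    qed
    finally show "B' $$ (i,j) = (E * B * transpose_mat E) $$ (i,j)" by simp
  qed (use Ec Bc B'c in auto)
  have EE: "E * E = 1\<^sub>m m" unfolding E_def by (rule Emat_sq[OF vm])
  have detE: "det E * det E = 1" using det_mult[OF Ec Ec] EE by simp
  have detB': "det B' = det B"
  proof -
    have "det B' = det (E * B) * det (transpose_mat E)"
      unfolding BE by (rule det_mult, use Ec Bc in auto)
    also have "\<dots> = det E * det B * det E" using det_mult[OF Ec Bc] det_transpose[OF Ec] by simp
    also have "\<dots> = det B" using detE by (simp add: algebra_simps)
    finally show ?thesis .
  qed
  have c1: "det B' \<noteq> 0" using detB' assms(2) B_def by simp
  have c2: "mut_B v (Btilde m n Q) = Btilde m n (fz_mut v Q)"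
  proof (rule eq_matI)
    fix i j assume "i < dim_row (Btilde m n (fz_mut v Q))" "j < dim_col (Btilde m n (fz_mut v Q))"
    then have i: "i < m" and j: "j < n" by (auto simp: Btilde_def)
    have jm: "j < m" using j nm by auto
    show "mut_B v (Btilde m n Q) $$ (i,j) = Btilde m n (fz_mut v Q) $$ (i,j)"
      using i j vm assms(3) Ment[OF i jm] unfolding mut_B_def Btilde_def B_def B'_def by simp
  qed (auto simp: mut_B_def Btilde_def)
  define Bh where "Bh = map_mat rat_of_int B"
  define Bh' where "Bh' = map_mat rat_of_int B'"
  define q where "q = (\<lambda>x. rat_of_int (p x))"
  define Er where "Er = Emat m v q"
  have qv: "q v = 0" unfolding q_def pv by simp
  have Erc: "Er \<in> carrier_mat m m" unfolding Er_def by simp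
  have Bhc: "Bh \<in> carrier_mat m m" unfolding Bh_def using Bc by simp
  have Er_map: "map_mat rat_of_int E = Er" unfolding E_def Er_def q_def by (rule map_Emat)
  have Bh'_eq: "Bh' = Er * Bh * transpose_mat Er"
  proof -
    have EBc: "E * B \<in> carrier_mat m m" using Ec Bc by auto
    have "Bh' = map_mat rat_of_int (E * B) * map_mat rat_of_int (transpose_mat E)"
      unfolding Bh'_def BE by (rule of_int_hom.mat_hom_mult[OF EBc], use Ec in auto)
    also have "map_mat rat_of_int (E * B) = Er * Bh"
      unfolding Bh_def Er_map[symmetric] by (rule of_int_hom.mat_hom_mult[OF Ec Bc])
    finally show ?thesis unfolding map_transpose Er_map .
  qed
  have ErEr: "Er * Er = 1\<^sub>m m" unfolding Er_def by (rule Emat_sq[OF vm])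
  have dBh: "det Bh \<noteq> 0" unfolding Bh_def using assms(2) B_def by simp
  have dBh': "det Bh' \<noteq> 0" unfolding Bh'_def using c1 by simp
  obtain Bi where Bi: "mat_inverse Bh = Some Bi" "Bh * Bi = 1\<^sub>m m" "Bi * Bh = 1\<^sub>m m" "Bi \<in> carrier_mat m m"
    using mat_inv_exists[OF Bhc dBh] by blast
  obtain Bi' where Bi': "mat_inverse Bh' = Some Bi'" "Bh' * Bi' = 1\<^sub>m m" "Bi' * Bh' = 1\<^sub>m m" "Bi' \<in> carrier_mat m m"
    using mat_inv_exists[OF _ dBh'] Bh'_def B'c by auto
  define X where "X = transpose_mat Er * Bi * Er"
  have Xc: "X \<in> carrier_mat m m" unfolding X_def using Erc Bi(4) by auto
  have ErtErt: "transpose_mat Er * transpose_mat Er = 1\<^sub>m m"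
    using transpose_mult[OF Erc Erc] ErEr by simp
  have BX: "Bh' * X = 1\<^sub>m m"
  proof -
    have "Bh' * X = Er * (Bh * ((transpose_mat Er * transpose_mat Er) * (Bi * Er)))"
      unfolding Bh'_eq X_def using Erc Bhc Bi(4) by (simp add: assoc_mult_mat[of _ m m _ m _ m])
    also have "\<dots> = Er * ((Bh * Bi) * Er)" unfolding ErtErt using Bhc Bi(4) Erc by simp
    also have "\<dots> = 1\<^sub>m m" unfolding Bi(2) using Erc ErEr by simp
    finally show ?thesis .
  qed
  have Bi'X: "Bi' = X"
  proof -
    have "Bi' = Bi' * (Bh' * X)" unfolding BX using Bi'(4) by simp
    also have "\<dots> = (Bi' * Bh') * X" using Bi'(4) Xc Bh'_def B'c by simp
    also have "\<dots> = X" unfolding Bi'(3) using Xc by simp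
    finally show ?thesis .
  qed
  define d where "d = rat_of_int \<bar>det B\<bar>"
  have L: "Lambda m n Q = d \<cdot>\<^sub>m (transpose_mat Bi - Bi)"
    unfolding Lambda_def Let_def B_def[symmetric] Bh_def[symmetric] Bi(1) d_def by simp
  have L': "Lambda m n (fz_mut v Q) = d \<cdot>\<^sub>m (transpose_mat X - X)"
    unfolding Lambda_def Let_def B'_def[symmetric] Bh'_def[symmetric] Bi'(1) d_def detB' Bi'X by simp
  have Lidx: "Lambda m n Q $$ (x,y) = d * (Bi $$ (y,x) - Bi $$ (x,y))" if "x < m" "y < m" for x y
    unfolding L using that Bi(4) by simp
  have L'idx: "Lambda m n (fz_mut v Q) $$ (x,y) = d * (X $$ (y,x) - X $$ (x,y))" if "x < m" "y < m" for x y
    unfolding L' using that Xc by simp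
  have Xidx: "X $$ (x,y) = (if x = v then - (if y = v then - Bi$$(v,v) + (\<Sum>l<m. q l * Bi$$(v,l)) else Bi$$(v,y))
      + (\<Sum>k<m. q k * (if y = v then - Bi$$(k,v) + (\<Sum>l<m. q l * Bi$$(k,l)) else Bi$$(k,y)))
      else (if y = v then - Bi$$(x,v) + (\<Sum>l<m. q l * Bi$$(x,l)) else Bi$$(x,y)))"
    if x: "x < m" and y: "y < m" for x y
  proof -
    have BiEc: "Bi * Er \<in> carrier_mat m m" using Bi(4) Erc by auto
    have "X = transpose_mat Er * (Bi * Er)" unfolding X_def using Erc Bi(4) by simp
    then have "X $$ (x,y) = (if x = v then - (Bi * Er)$$(v,y) + (\<Sum>k<m. q k * (Bi * Er)$$(k,y)) else (Bi * Er)$$(x,y))"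
      unfolding Er_def using EtY_entry[where p=q, OF BiEc[unfolded Er_def] x y vm qv] by simp
    moreover have "(Bi * Er)$$(k,y) = (if y = v then - Bi$$(k,v) + (\<Sum>l<m. q l * Bi$$(k,l)) else Bi$$(k,y))"
      if "k < m" for k
      unfolding Er_def by (rule XE_entry[where p=q, OF Bi(4) that y vm qv])
    moreover have "(\<Sum>k<m. q k * (Bi * Er)$$(k,y)) = (\<Sum>k<m. q k * (if y = v then - Bi$$(k,v) + (\<Sum>l<m. q l * Bi$$(k,l)) else Bi$$(k,y)))"
      by (rule sum.cong, simp_all add: calculation(2))
    ultimately show ?thesis using x vm by simp
  qed
  have c3: "mut_L v (Btilde m n Q) (Lambda m n Q) = Lambda m n (fz_mut v Q)"
  proof (rule eq_matI)
    have dimL: "dim_row (Lambda m n Q) = m" "dim_col (Lambda m n Q) = m" unfolding L using Bi(4) by auto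
    have dimL': "dim_row (Lambda m n (fz_mut v Q)) = m" "dim_col (Lambda m n (fz_mut v Q)) = m"
      unfolding L' using Xc by auto
    show "dim_row (mut_L v (Btilde m n Q) (Lambda m n Q)) = dim_row (Lambda m n (fz_mut v Q))"
      "dim_col (mut_L v (Btilde m n Q) (Lambda m n Q)) = dim_col (Lambda m n (fz_mut v Q))"
      unfolding mut_L_def dimL dimL' by auto
    fix i j assume "i < dim_row (Lambda m n (fz_mut v Q))" "j < dim_col (Lambda m n (fz_mut v Q))"
    then have i: "i < m" and j: "j < m" using dimL' by auto
    have Bt: "(\<Sum>l<dim_row (Btilde m n Q). of_int (pos (Btilde m n Q $$ (l,v))) * f l) = (\<Sum>l<m. q l * f l)" for f
      by (rule sum.cong, auto simp: Btilde_def q_def p_def B_def vm assms(3))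
    have "mut_L v (Btilde m n Q) (Lambda m n Q) $$ (i,j) =
      (if i \<noteq> v \<and> j = v then
        - Lambda m n Q $$ (i,v) + (\<Sum>l<m. q l * Lambda m n Q $$ (i,l))
     else if i = v \<and> j \<noteq> v then
        - Lambda m n Q $$ (v,j) + (\<Sum>l<m. q l * Lambda m n Q $$ (l,j))
     else Lambda m n Q $$ (i,j))"
      unfolding mut_L_def Bt using i j dimL by simp
    also have "\<dots> = Lambda m n (fz_mut v Q) $$ (i,j)"
    proof -
      have sumL1: "(\<Sum>l<m. q l * Lambda m n Q $$ (i,l)) = d * ((\<Sum>l<m. q l * Bi $$ (l,i)) - (\<Sum>l<m. q l * Bi $$ (i,l)))"
      proof -
        have "(\<Sum>l<m. q l * Lambda m n Q $$ (i,l)) = (\<Sum>l<m. d * (q l * Bi $$ (l,i)) - d * (q l * Bi $$ (i,l)))"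
          by (rule sum.cong) (auto simp: Lidx[OF i] algebra_simps)
        also have "\<dots> = d * ((\<Sum>l<m. q l * Bi $$ (l,i)) - (\<Sum>l<m. q l * Bi $$ (i,l)))"
          by (simp add: sum_distrib_left sum_subtractf right_diff_distrib)
        finally show ?thesis .
      qed
      have sumL2: "(\<Sum>l<m. q l * Lambda m n Q $$ (l,j)) = d * ((\<Sum>l<m. q l * Bi $$ (j,l)) - (\<Sum>l<m. q l * Bi $$ (l,j)))"
      proof -
        have "(\<Sum>l<m. q l * Lambda m n Q $$ (l,j)) = (\<Sum>l<m. d * (q l * Bi $$ (j,l)) - d * (q l * Bi $$ (l,j)))"
          by (rule sum.cong) (auto simp: Lidx[OF _ j] algebra_simps)
        also have "\<dots> = d * ((\<Sum>l<m. q l * Bi $$ (j,l)) - (\<Sum>l<m. q l * Bi $$ (l,j)))"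
          by (simp add: sum_distrib_left sum_subtractf right_diff_distrib)
        finally show ?thesis .
      qed
      show ?thesis
      proof (cases "i = v")
        case True
        show ?thesis
        proof (cases "j = v")
          case True
          then show ?thesis using \<open>i = v\<close> L'idx[OF i j] Lidx[OF i j] by simp
        next
          case False
          have X1: "X$$(v,j) = - Bi$$(v,j) + (\<Sum>l<m. q l * Bi$$(l,j))" using Xidx[OF vm j] False by simp
          have X2: "X$$(j,v) = - Bi$$(j,v) + (\<Sum>l<m. q l * Bi$$(j,l))" using Xidx[OF j vm] False by simp
          show ?thesis using False unfolding \<open>i = v\<close> L'idx[OF vm j] Lidx[OF vm j] X1 X2 sumL2[unfolded \<open>i = v\<close>]
            by (simp add: algebra_simps)
        qed
      next
        case iv: False
        show ?thesis
        proof (cases "j = v")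
          case True
          have X1: "X$$(v,i) = - Bi$$(v,i) + (\<Sum>l<m. q l * Bi$$(l,i))" using Xidx[OF vm i] iv by simp
          have X2: "X$$(i,v) = - Bi$$(i,v) + (\<Sum>l<m. q l * Bi$$(i,l))" using Xidx[OF i vm] iv by simp
          show ?thesis using iv unfolding \<open>j = v\<close> L'idx[OF i vm] Lidx[OF i vm] X1 X2 sumL1[unfolded \<open>j = v\<close>]
            by (simp add: algebra_simps)
        next
          case False
          then show ?thesis using iv L'idx[OF i j] Lidx[OF i j] Xidx[OF i j] Xidx[OF j i] by simp
        qed
      qed
    qed
    finally show "mut_L v (Btilde m n Q) (Lambda m n Q) $$ (i,j) = Lambda m n (fz_mut v Q) $$ (i,j)" .
  qed
  show ?thesis using c1 c2 c3 unfolding B'_def by simp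
qed
end
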